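(* Fix $T>0$ and $L>0$. For $t\in[0,T]$ and $x,y\in[-L,L]$ let $H_L^D(t;x,y)=\Gamma(t,x-y)-\Gamma_L^D(t;x,y)$. Then $H_L^D(t;x,y)>0$ and $$\int_{-L}^Ldy\,H_L^D(t;x,y)\le K_{t,x,L}\left[e^{-\frac{(L-x)^2}{4t}}+e^{-\frac{(L+x)^2}{4t}}\right],$$ $$\int_0^tds\int_{-L}^Ldy\,H_L^D(s;x,y)\le t\,K_{t,x,L}\left[e^{-\frac{(L-x)^2}{4t}}+e^{-\frac{(L+x)^2}{4t}}\right],$$ $$\int_0^tds\int_{-L}^Ldy\,[H_L^D(s;x,y)]^2\le\sqrt{\tfrac{t}{\pi}}\,K_{t,x,L}\left[e^{-\frac{(L-x)^2}{4t}}+e^{-\frac{(L+x)^2}{4t}}\right]^2.$$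
   Context: $\Gamma(t,x)=(4\pi t)^{-1/2}\exp(-x^2/(4t))$ for $t>0$. $\Gamma_L^D(t;x,y)=\sum_{m\in\mathbb Z}[\Gamma(t,x-y+4mL)-\Gamma(t,x+y+(4m+2)L)]$ (equivalently $\frac1L\sum_{n\ge1}e^{-\pi^2n^2t/(4L^2)}\sin(\frac{n\pi}{2L}(x+L))\sin(\frac{n\pi}{2L}(y+L))$) is the Green's function of $\partial_t-\partial_x^2$ on $[-L,L]$ with vanishing Dirichlet boundary conditions. $K_{t,x,L}=\min\left(\frac12,\sqrt{t/\pi}\,\max\left(\frac1{L-x},\frac1{L+x}\right)\right)$. *)

theory Defs
  imports "HOL-Analysis.Analysis"
begin

definition heatGamma :: "real \<Rightarrow> real \<Rightarrow> real" where
  "heatGamma t x = (4 * pi * t) powr (-1/2) * exp (- (x^2) / (4 * t))"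

text \<open>Dirichlet Green's function on [-L,L], given by the method of images
  (sum over all integers m).\<close>
definition GammaD :: "real \<Rightarrow> real \<Rightarrow> real \<Rightarrow> real \<Rightarrow> real" where
  "GammaD L t x y =
     (\<Sum>\<^sub>\<infinity> m :: int. heatGamma t (x - y + 4 * of_int m * L)
                     - heatGamma t (x + y + (4 * of_int m + 2) * L))"

definition HD :: "real \<Rightarrow> real \<Rightarrow> real \<Rightarrow> real \<Rightarrow> real" where
  "HD L t x y = heatGamma t (x - y) - GammaD L t x y"

text \<open>K_{t,x,L}; at x = L or x = -L one of the quotients 1/(L -+ x) is +infinity,
  so the max is +infinity and K = 1/2.\<close>
definition Kconst :: "real \<Rightarrow> real \<Rightarrow> real \<Rightarrow> real" where
  "Kconst t x L =
     (if x = L \<or> x = - L then 1/2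
      else min (1/2) (sqrt (t / pi) * max (1 / (L - x)) (1 / (L + x))))"

end

theory Submission
  imports Defs "HOL-Probability.Probability"
begin

lemma hG_alt: assumes "t > 0" shows "heatGamma t w = exp (- (w^2) / (4 * t)) / sqrt (4 * pi * t)"
proof -
  have e: "-1/2 = -(1/2::real)" by simp
  have "(4*pi*t) powr (-1/2) = inverse ((4*pi*t) powr (1/2))" by (simp only: e powr_minus)
  also have "\<dots> = inverse (sqrt (4*pi*t))" using assms by (simp add: powr_half_sqrt)
  finally show ?thesis unfolding heatGamma_def by (simp only: divide_inverse_commute)
qed

lemma hG_zero[simp]: "heatGamma 0 w = 0"
  unfolding heatGamma_def by simp

lemma hG_pos: "t > 0 \<Longrightarrow> heatGamma t w > 0"
  by (simp add: hG_alt)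

lemma hG_even: "heatGamma t (-w) = heatGamma t w"
  unfolding heatGamma_def by simp

lemma hG_mono: assumes "t > 0" "\<bar>w1\<bar> \<le> \<bar>w2\<bar>" shows "heatGamma t w2 \<le> heatGamma t w1"
proof -
  have "w1^2 \<le> w2^2" using assms(2) by (metis abs_le_square_iff)
  hence "- (w2^2) / (4*t) \<le> - (w1^2) / (4*t)" using assms(1) by (intro divide_right_mono) auto
  hence "exp (- (w2^2) / (4*t)) \<le> exp (- (w1^2) / (4*t))" by (simp only: exp_le_cancel_iff)
  moreover have "0 \<le> sqrt (4*pi*t)" using assms(1) by simp
  ultimately show ?thesis unfolding hG_alt[OF assms(1)] by (rule divide_right_mono)
qed

lemma hG_smono: assumes "t > 0" "\<bar>w1\<bar> < \<bar>w2\<bar>" shows "heatGamma t w2 < heatGamma t w1"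
proof -
  have "w1^2 < w2^2" using assms(2) by (meson abs_le_square_iff not_le)
  hence "- (w2^2) / (4*t) < - (w1^2) / (4*t)" using assms(1) by (intro divide_strict_right_mono) auto
  hence "exp (- (w2^2) / (4*t)) < exp (- (w1^2) / (4*t))" by (simp only: exp_less_cancel_iff)
  moreover have "0 < sqrt (4*pi*t)" using assms(1) by simp
  ultimately show ?thesis unfolding hG_alt[OF assms(1)] by (rule divide_strict_right_mono)
qed

lemma geo_int: fixes r :: real assumes "0 \<le> r" "r < 1"
  shows "(\<lambda>m::int. r ^ nat \<bar>m\<bar>) summable_on UNIV"
proof -
  have g: "(\<lambda>n::nat. r ^ n) summable_on UNIV"
    using assms by (subst summable_on_UNIV_nonneg_real_iff) (auto intro: summable_geometric)
  have g2: "(\<lambda>n::nat. r ^ Suc n) summable_on UNIV"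
  proof (subst summable_on_UNIV_nonneg_real_iff)
    show "summable (\<lambda>n. r ^ Suc n)" using summable_mult[OF summable_geometric[of r], of r] assms by simp
  qed (use assms in simp)
  have 1: "(\<lambda>m::int. r ^ nat \<bar>m\<bar>) summable_on (range int)"
    by (subst summable_on_reindex) (auto simp: o_def inj_on_def g)
  have 2: "(\<lambda>m::int. r ^ nat \<bar>m\<bar>) summable_on (range (\<lambda>n::nat. - int n - 1))"
  proof (subst summable_on_reindex)
    show "inj_on (\<lambda>n::nat. - int n - 1) UNIV" by (auto simp: inj_on_def)
    have "(\<lambda>m::int. r ^ nat \<bar>m\<bar>) \<circ> (\<lambda>n::nat. - int n - 1) = (\<lambda>n. r ^ Suc n)"
      by (auto simp: o_def nat_add_distrib)
    then show "((\<lambda>m::int. r ^ nat \<bar>m\<bar>) \<circ> (\<lambda>n::nat. - int n - 1)) summable_on UNIV" using g2 by simp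
  qed
  have "UNIV = range int \<union> range (\<lambda>n::nat. - int n - 1)"
  proof -
    have "m \<in> range int \<union> range (\<lambda>n::nat. - int n - 1)" for m :: int
    proof (cases "m \<ge> 0")
      case True then show ?thesis by (metis UnI1 nonneg_int_cases rangeI)
    next
      case False then have "m = - int (nat (-m-1)) - 1" by simp
      then show ?thesis by blast
    qed
    then show ?thesis by blast
  qed
  then show ?thesis using summable_on_Un_disjoint[OF 1 2] by (metis summable_on_union 1 2)
qed

lemma hG_bound_geo: assumes "t > 0"
  shows "heatGamma t (c + k * of_int m) \<le> (exp (c^2/(4*t)) / sqrt (4*pi*t)) * exp (-(k^2)/(8*t)) ^ nat \<bar>m\<bar>"
proof -
  define M where "M = real (nat \<bar>m\<bar>)"
  have M: "M = \<bar>of_int m\<bar>" unfolding M_def by simp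
  have Mle: "M \<le> (of_int m)^2"
  proof (cases "m = 0")
    case False then have "(1::int) \<le> \<bar>m\<bar>" by linarith
    then have "(1::real) \<le> of_int \<bar>m\<bar>" by (metis of_int_1 of_int_le_iff)
    then have "\<bar>of_int m\<bar> \<ge> (1::real)" by simp
    from mult_right_mono[OF this, of "\<bar>of_int m\<bar>"] show ?thesis unfolding M by (simp add: power2_eq_square)
  qed (simp add: M)
  have sq: "(k * of_int m)^2 \<le> 2 * (c + k * of_int m)^2 + 2 * c^2"
  proof -
    have "0 \<le> (2*c + k * of_int m)^2" by simp
    moreover have "2 * (c + k * of_int m)^2 + 2 * c^2 - (k * of_int m)^2 = (2*c + k * of_int m)^2"
      by (simp add: power2_eq_square algebra_simps)
    ultimately show ?thesis by linarith
  qed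
  have "k^2 * M \<le> k^2 * (of_int m)^2" using Mle by (simp add: mult_left_mono)
  also have "\<dots> = (k * of_int m)^2" by (simp add: power_mult_distrib)
  finally have key: "k^2 * M \<le> 2 * (c + k * of_int m)^2 + 2 * c^2" using sq by linarith
  have "- ((c + k * of_int m)^2) / (4*t) \<le> c^2/(4*t) + M * (-(k^2)/(8*t))"
  proof -
    have "- ((c + k * of_int m)^2) / (4*t) = (-2 * (c + k * of_int m)^2) / (8*t)" by simp
    also have "\<dots> \<le> (2 * c^2 - k^2 * M) / (8*t)" using key assms by (intro divide_right_mono) auto
    also have "\<dots> = c^2/(4*t) + M * (-(k^2)/(8*t))" using assms by (simp add: field_simps)
    finally show ?thesis .
  qed
  then have "exp (- ((c + k * of_int m)^2) / (4*t)) \<le> exp (c^2/(4*t) + M * (-(k^2)/(8*t)))" by simp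
  also have "\<dots> = exp (c^2/(4*t)) * exp (-(k^2)/(8*t)) ^ nat \<bar>m\<bar>"
    by (simp only: M_def exp_add exp_of_nat_mult)
  finally have "exp (- ((c + k * of_int m)^2) / (4*t)) \<le> exp (c^2/(4*t)) * exp (-(k^2)/(8*t)) ^ nat \<bar>m\<bar>" .
  then have "exp (- ((c + k * of_int m)^2) / (4*t)) / sqrt (4*pi*t) \<le> (exp (c^2/(4*t)) * exp (-(k^2)/(8*t)) ^ nat \<bar>m\<bar>) / sqrt (4*pi*t)"
    using assms by (intro divide_right_mono) simp_all
  moreover have eq: "(exp (c^2/(4*t)) / sqrt (4*pi*t)) * exp (-(k^2)/(8*t)) ^ nat \<bar>m\<bar> = (exp (c^2/(4*t)) * exp (-(k^2)/(8*t)) ^ nat \<bar>m\<bar>) / sqrt (4*pi*t)"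
    by (rule times_divide_eq_left)
  ultimately show ?thesis unfolding hG_alt[OF assms] by simp
qed

lemma hG_summable: assumes "t > 0" "k \<noteq> 0"
  shows "(\<lambda>m::int. heatGamma t (c + k * of_int m)) summable_on UNIV"
proof (rule summable_on_comparison_test)
  have "exp (-(k^2)/(8*t)) < 1" using assms by simp
  then show "(\<lambda>m::int. (exp (c^2/(4*t)) / sqrt (4*pi*t)) * exp (-(k^2)/(8*t)) ^ nat \<bar>m\<bar>) summable_on UNIV"
    by (intro summable_on_cmult_right geo_int) auto
qed (use assms hG_bound_geo in \<open>auto intro: less_imp_le hG_pos\<close>)

locale setup5 =
  fixes L t x y :: real
  assumes t: "t > 0" and L: "L > 0" and x1: "-L \<le> x" and x2: "x \<le> L" and y1: "-L \<le> y" and y2: "y \<le> L"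
begin

definition A :: "int \<Rightarrow> real" where "A = (\<lambda>m. heatGamma t (x + y + (4 * of_int m + 2) * L))"
definition B :: "int \<Rightarrow> real" where "B = (\<lambda>m. heatGamma t (x - y + 4 * of_int m * L))"

lemma A_alt: "A m = heatGamma t ((x + y + 2*L) + (4*L) * of_int m)"
  unfolding A_def by (simp add: algebra_simps)
lemma B_alt: "B m = heatGamma t ((x - y) + (4*L) * of_int m)"
  unfolding B_def by (simp add: algebra_simps)

lemma A_sum: "A summable_on UNIV"
  unfolding A_alt using hG_summable[OF t, of "4*L"] L by simp
lemma B_sum: "B summable_on UNIV"
  unfolding B_alt using hG_summable[OF t, of "4*L"] L by simp

lemma GD_eq: "GammaD L t x y = infsum B UNIV - infsum A UNIV"
proof -
  have "GammaD L t x y = infsum (\<lambda>m. B m + (- A m)) UNIV"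
    unfolding GammaD_def A_def B_def by simp
  also have "\<dots> = infsum B UNIV + infsum (\<lambda>m. - A m) UNIV"
    by (rule infsum_add[OF B_sum summable_on_uminus[THEN iffD2, OF A_sum]])
  also have "\<dots> = infsum B UNIV - infsum A UNIV" by (simp add: infsum_uminus)
  finally show ?thesis .
qed

lemma HD_repr: "HD L t x y = B 0 - infsum B UNIV + infsum A UNIV"
  unfolding HD_def GD_eq by (simp add: B_def)

lemma B_split: "infsum B UNIV = B 0 + infsum B (-{0})"
proof -
  have "infsum B (insert 0 (-{0})) = B 0 + infsum B (-{0})"
    by (rule infsum_insert) (auto intro: summable_on_subset[OF B_sum])
  moreover have "insert 0 (-{0::int}) = UNIV" by auto
  ultimately show ?thesis by simp
qed

lemma A_split: "infsum A UNIV = A 0 + A (-1) + infsum A (-{0,-1})"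
proof -
  have "infsum A (insert 0 (insert (-1) (-{0,-1}))) = A 0 + infsum A (insert (-1) (-{0,-1}))"
    by (rule infsum_insert) (auto intro: summable_on_subset[OF A_sum])
  also have "infsum A (insert (-1) (-{0,-1})) = A (-1) + infsum A (-{0,-1})"
    by (rule infsum_insert) (auto intro: summable_on_subset[OF A_sum])
  moreover have "insert 0 (insert (-1) (-{0,-1::int})) = UNIV" by auto
  ultimately show ?thesis by simp
qed

definition tau :: "int \<Rightarrow> int" where "tau m = (if m \<ge> 0 then m + 1 else m)"
definition sig :: "int \<Rightarrow> int" where "sig m = (if m \<ge> 1 then m else m + 1)"

lemma P_facts:
  fixes m :: int
  shows "m \<ge> 0 \<Longrightarrow> of_int m * L \<ge> 0" "m \<ge> 1 \<Longrightarrow> of_int m * L \<ge> L"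
        "m \<le> -1 \<Longrightarrow> of_int m * L \<le> -L" "m \<le> -2 \<Longrightarrow> of_int m * L \<le> -2*L"
proof -
  show "m \<ge> 0 \<Longrightarrow> of_int m * L \<ge> 0" using L by simp
  show "m \<ge> 1 \<Longrightarrow> of_int m * L \<ge> L" using L mult_right_mono[of 1 "of_int m" L] by simp
  show "m \<le> -1 \<Longrightarrow> of_int m * L \<le> -L" using L mult_right_mono[of "of_int m" "-1" L] by simp
  show "m \<le> -2 \<Longrightarrow> of_int m * L \<le> -2*L" using L mult_right_mono[of "of_int m" "-2" L] by simp
qed

lemma cmp_tau: "B (tau m) \<le> A m"
proof -
  define P where "P = of_int m * L"
  have eA: "x + y + (4 * of_int m + 2) * L = x + y + 4*P + 2*L" unfolding P_def by (simp add: algebra_simps)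
  show ?thesis
  proof (cases "m \<ge> 0")
    case True
    have eB: "x - y + 4 * of_int (tau m) * L = x - y + 4*P + 4*L" unfolding P_def tau_def using True by (simp add: algebra_simps)
    have P: "P \<ge> 0" using P_facts(1)[OF True] P_def by simp
    have "\<bar>x + y + 4*P + 2*L\<bar> \<le> \<bar>x - y + 4*P + 4*L\<bar>" using P x1 x2 y1 y2 L by linarith
    then show ?thesis unfolding A_def B_def eA eB by (rule hG_mono[OF t])
  next
    case False
    have eB: "x - y + 4 * of_int (tau m) * L = x - y + 4*P" unfolding P_def tau_def using False by (simp add: algebra_simps)
    have P: "P \<le> -L" using P_facts(3) False P_def by simp
    have "\<bar>x + y + 4*P + 2*L\<bar> \<le> \<bar>x - y + 4*P\<bar>" using P x1 x2 y1 y2 L by linarith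
    then show ?thesis unfolding A_def B_def eA eB by (rule hG_mono[OF t])
  qed
qed

lemma cmp_tau_strict: "B (tau (if y < L then 0 else -1)) < A (if y < L then 0 else -1)"
proof (cases "y < L")
  case True
  have "\<bar>x + y + 2*L\<bar> < \<bar>x - y + 4*L\<bar>" using True x1 x2 y1 y2 L by linarith
  then show ?thesis using True unfolding A_def B_def tau_def by (simp add: hG_smono[OF t])
next
  case False
  have "\<bar>x + y - 2*L\<bar> < \<bar>x - y - 4*L\<bar>" using False x1 x2 y1 y2 L by linarith
  moreover have "A (-1) = heatGamma t (x + y - 2*L)" "B (-1) = heatGamma t (x - y - 4*L)"
    unfolding A_def B_def by (simp_all add: algebra_simps)
  moreover have "tau (-1) = -1" by (simp add: tau_def)
  ultimately show ?thesis using False by (simp add: hG_smono[OF t])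
qed

lemma cmp_sig: "m \<in> -{0,-1} \<Longrightarrow> A m \<le> B (sig m)"
proof -
  assume m: "m \<in> -{0,-1}"
  define P where "P = of_int m * L"
  have eA: "x + y + (4 * of_int m + 2) * L = x + y + 4*P + 2*L" unfolding P_def by (simp add: algebra_simps)
  show ?thesis
  proof (cases "m \<ge> 1")
    case True
    have eB: "x - y + 4 * of_int (sig m) * L = x - y + 4*P" unfolding P_def sig_def using True by (simp add: algebra_simps)
    have P: "P \<ge> L" using P_facts(2)[OF True] P_def by simp
    have "\<bar>x - y + 4*P\<bar> \<le> \<bar>x + y + 4*P + 2*L\<bar>" using P x1 x2 y1 y2 L by linarith
    then show ?thesis unfolding A_def B_def eA eB by (rule hG_mono[OF t])
  next
    case False
    then have m2: "m \<le> -2" using m by auto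
    have eB: "x - y + 4 * of_int (sig m) * L = x - y + 4*P + 4*L" unfolding P_def sig_def using False by (simp add: algebra_simps)
    have P: "P \<le> -2*L" using P_facts(4)[OF m2] P_def by simp
    have "\<bar>x - y + 4*P + 4*L\<bar> \<le> \<bar>x + y + 4*P + 2*L\<bar>" using P x1 x2 y1 y2 L by linarith
    then show ?thesis unfolding A_def B_def eA eB by (rule hG_mono[OF t])
  qed
qed

lemma HD_pos: "HD L t x y > 0"
proof -
  define SB where "SB = infsum B (-{0})"
  have hB: "(B has_sum SB) (-{0})" unfolding SB_def by (rule has_sum_infsum) (auto intro: summable_on_subset[OF B_sum])
  have hBt: "((\<lambda>m. B (tau m)) has_sum SB) UNIV"
  proof (subst has_sum_reindex_bij_witness[where i = "\<lambda>n. if n > 0 then n - 1 else n" and j = tau and T = "-{0}" and h = B])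
    show "(B has_sum SB) (-{0})" by (rule hB)
  qed (auto simp: tau_def)
  have hA: "(A has_sum infsum A UNIV) UNIV" by (rule has_sum_infsum[OF A_sum])
  have "SB < infsum A UNIV"
    by (rule has_sum_strict_mono[OF hBt hA, of "if y < L then 0 else -1"]) (use cmp_tau cmp_tau_strict in auto)
  then show ?thesis unfolding HD_repr B_split SB_def by simp
qed

lemma HD_le: "HD L t x y \<le> heatGamma t (2*L - x - y) + heatGamma t (2*L + x + y)"
proof -
  define SB where "SB = infsum B (-{0})"
  define SA where "SA = infsum A (-{0,-1})"
  have hB: "(B has_sum SB) (-{0})" unfolding SB_def by (rule has_sum_infsum) (auto intro: summable_on_subset[OF B_sum])
  have hA: "(A has_sum SA) (-{0,-1})" unfolding SA_def by (rule has_sum_infsum) (auto intro: summable_on_subset[OF A_sum])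
  have hBs: "((\<lambda>m. B (sig m)) has_sum SB) (-{0,-1})"
  proof (subst has_sum_reindex_bij_witness[where i = "\<lambda>n. if n \<ge> 1 then n else n - 1" and j = sig and T = "-{0}" and h = B])
    show "(B has_sum SB) (-{0})" by (rule hB)
  qed (auto simp: sig_def)
  have "SA \<le> SB" by (rule has_sum_mono[OF hA hBs]) (use cmp_sig in auto)
  moreover have "A 0 = heatGamma t (2*L + x + y)" unfolding A_def by (simp add: algebra_simps)
  moreover have "A (-1) = heatGamma t (2*L - x - y)"
  proof -
    have "A (-1) = heatGamma t (- (2*L - x - y))" unfolding A_def by (simp add: algebra_simps)
    then show ?thesis by (simp only: hG_even)
  qed
  ultimately show ?thesis unfolding HD_repr B_split A_split SB_def[symmetric] SA_def[symmetric] by simp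
qed

end


lemma hG_cont: assumes "s > 0" "continuous_on S g" shows "continuous_on S (\<lambda>y. heatGamma s (g y))"
proof -
  have "(\<lambda>y. heatGamma s (g y)) = (\<lambda>y. exp (- ((g y)^2) / (4 * s)) / sqrt (4 * pi * s))"
    using hG_alt[OF assms(1)] by auto
  then show ?thesis using assms by (simp only:) (auto intro!: continuous_intros)
qed

lemma hG_deriv: assumes s: "s > 0"
  shows "((\<lambda>w. heatGamma s w) has_real_derivative (- w / (2 * s) * heatGamma s w)) (at w)"
proof -
  have e: "(\<lambda>w. heatGamma s w) = (\<lambda>w. exp (- (w^2) / (4 * s)) / sqrt (4 * pi * s))"
    using hG_alt[OF s] by auto
  have D: "((\<lambda>w. exp (- (w^2) / (4 * s)) / sqrt (4 * pi * s)) has_real_derivative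
      (exp (- (w^2) / (4 * s)) * (- (2 * w) / (4 * s)) / sqrt (4 * pi * s))) (at w)"
    by (intro DERIV_cdivide DERIV_fun_exp) (rule derivative_eq_intros refl | simp add: s)+
  have E: "exp (- (w^2) / (4 * s)) * (- (2 * w) / (4 * s)) / sqrt (4 * pi * s) = - w / (2 * s) * heatGamma s w"
    unfolding hG_alt[OF s] using s by (simp add: field_simps)
  have E2: "- w / (2 * s) * heatGamma s w = - w / (2 * s) * (exp (- (w^2) / (4 * s)) / sqrt (4 * pi * s))"
    unfolding hG_alt[OF s] ..
  show ?thesis unfolding e using D unfolding E E2 .
qed

lemma G_half: assumes s: "s > 0" and ac: "a \<le> c"
  shows "integral {a..c} (\<lambda>y. heatGamma s (y - c)) \<le> 1/2"
proof -
  define g where "g = (\<lambda>y. heatGamma s (y - c))"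
  have gn: "g = normal_density c (sqrt (2 * s))"
  proof
    fix y
    have "sqrt (2 * pi * (sqrt (2 * s))\<^sup>2) = sqrt (4*pi * s)" using s by simp
    moreover have "(2 * (sqrt (2 * s))\<^sup>2) = 4 * s" using s by simp
    ultimately show "g y = normal_density c (sqrt (2 * s)) y"
      unfolding g_def normal_density_def hG_alt[OF s] by (simp add: power2_commute)
  qed
  have cont: "continuous_on S g" for S unfolding g_def by (intro hG_cont s continuous_intros)
  have int: "g integrable_on S" if "S = {u..v}" for S u v using cont that integrable_continuous_interval by blast
  have sym: "g (-z) = g (z + 2*c)" for z unfolding g_def using hG_even[of s "-z-c"] by (simp add: algebra_simps)
  have sym2: "g (2*c - z) = g z" for z using sym[of "z - 2*c"] by (simp add: algebra_simps)
  have refl: "integral {c..2*c-a} g = integral {a..c} g"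
  proof -
    have 1: "integral {-c - -(2*c) .. -a - -(2*c)} (\<lambda>z. g (- (z + -(2*c)))) = integral {-c .. -a} (\<lambda>w. g (-w))"
      by (rule integral_shift_real_ivl)
    have 2: "(\<lambda>z. g (- (z + -(2*c)))) = g" using sym2 by (auto simp: fun_eq_iff algebra_simps)
    have 3: "-c - -(2*c) = c" "-a - -(2*c) = 2*c - a" by simp_all
    from 1 have "integral {c..2*c-a} g = integral {-c..-a} (\<lambda>w. g(-w))" unfolding 2 3 .
    also have "\<dots> = integral {a..c} g" by (rule Henstock_Kurzweil_Integration.integral_reflect_real)
    finally show ?thesis .
  qed
  have comb: "integral {a..c} g + integral {c..2*c-a} g = integral {a..2*c-a} g"
    using ac by (intro Henstock_Kurzweil_Integration.integral_combine int) auto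
  have iu: "g integrable_on UNIV" unfolding gn by (rule integrable_on_lborel) (use s in simp)
  have "integral {a..2*c-a} g \<le> integral UNIV g"
    by (rule integral_subset_le) (use iu int in \<open>auto simp: gn\<close>)
  also have "integral UNIV g = 1" unfolding gn using s by (subst integral_lborel) auto
  finally have "integral {a..2*c-a} g \<le> 1" .
  then show ?thesis using comb refl unfolding g_def[symmetric] by linarith
qed

lemma G_half2: assumes s: "s > 0" and L: "L \<ge> 0"
  shows "integral {-L..L} (\<lambda>y. heatGamma s (L - y)) \<le> 1/2"
    and "integral {-L..L} (\<lambda>y. heatGamma s (L + y)) \<le> 1/2"
proof -
  have e: "(\<lambda>y. heatGamma s (L - y)) = (\<lambda>y. heatGamma s (y - L))"
  proof (rule ext)
    fix y show "heatGamma s (L - y) = heatGamma s (y - L)" using hG_even[of s "y - L"] by simp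
  qed
  show 1: "integral {-L..L} (\<lambda>y. heatGamma s (L - y)) \<le> 1/2" unfolding e using G_half[OF s, of "-L" L] L by simp
  have "integral {-L..L} (\<lambda>y. heatGamma s (L + y)) = integral {-L..L} (\<lambda>y. heatGamma s (L - y))"
    using Henstock_Kurzweil_Integration.integral_reflect_real[of L "-L" "\<lambda>y. heatGamma s (L - y)"] by simp
  then show "integral {-L..L} (\<lambda>y. heatGamma s (L + y)) \<le> 1/2" using 1 by simp
qed

lemma I1: assumes s: "s > 0" and x1: "-L \<le> x" and x2: "x \<le> L"
  shows "integral {-L..L} (\<lambda>y. heatGamma s (2*L - x - y)) \<le> 1/2 * exp (- ((L-x)^2) / (4 * s))"
proof -
  define e where "e = exp (- ((L-x)^2) / (4 * s))"
  have pw: "heatGamma s (2*L - x - y) \<le> e * heatGamma s (L - y)" if y: "y \<in> {-L..L}" for y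
  proof -
    have "(L-x)^2 + (L-y)^2 \<le> (2*L - x - y)^2"
    proof -
      have "0 \<le> (L-x)*(L-y)" using y x2 by auto
      moreover have "(2*L - x - y)^2 = (L-x)^2 + (L-y)^2 + 2*((L-x)*(L-y))" by (simp add: power2_eq_square algebra_simps)
      ultimately show ?thesis by linarith
    qed
    then have "((L-x)^2 + (L-y)^2) / (4 * s) \<le> (2*L - x - y)^2 / (4 * s)"
      using s by (intro divide_right_mono) auto
    then have h: "(L-x)^2 / (4 * s) + (L-y)^2 / (4 * s) \<le> (2*L - x - y)^2 / (4 * s)"
      by (simp only: add_divide_distrib)
    have "- ((2*L - x - y)^2) / (4 * s) = - ((2*L - x - y)^2 / (4 * s))"
         "- ((L-x)^2) / (4 * s) = - ((L-x)^2 / (4 * s))" "- ((L-y)^2) / (4 * s) = - ((L-y)^2 / (4 * s))"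
      by simp_all
    then have "- ((2*L - x - y)^2) / (4 * s) \<le> - ((L-x)^2) / (4 * s) + - ((L-y)^2)/(4 * s)"
      using h by linarith
    then have "exp (- ((2*L - x - y)^2) / (4 * s)) \<le> e * exp (- ((L-y)^2)/(4 * s))"
      unfolding e_def exp_add[symmetric] by simp
    then have "exp (- ((2*L - x - y)^2) / (4 * s)) / sqrt (4*pi * s) \<le> (e * exp (- ((L-y)^2)/(4 * s))) / sqrt (4*pi * s)"
      using s by (intro divide_right_mono) auto
    then show ?thesis unfolding hG_alt[OF s] by simp
  qed
  have L: "L \<ge> 0" using x1 x2 by simp
  have "integral {-L..L} (\<lambda>y. heatGamma s (2*L - x - y)) \<le> integral {-L..L} (\<lambda>y. e * heatGamma s (L - y))"
    by (rule integral_le) (auto intro!: integrable_continuous_interval hG_cont continuous_intros s pw)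
  also have "\<dots> = e * integral {-L..L} (\<lambda>y. heatGamma s (L - y))" by simp
  also have "\<dots> \<le> e * (1/2)" using G_half2(1)[OF s L] by (intro mult_left_mono) (auto simp: e_def)
  finally show ?thesis unfolding e_def by simp
qed

lemma sqrt_id: assumes "s > 0" shows "2 * s / sqrt (4*pi * s) = sqrt (s/pi)"
proof -
  have "sqrt (4*pi * s) = 2 * sqrt pi * sqrt s" by (simp add: real_sqrt_mult)
  moreover have "s = sqrt s * sqrt s" using assms by simp
  ultimately have "2 * s / sqrt (4*pi * s) = sqrt s / sqrt pi" using assms by (simp add: field_simps)
  then show ?thesis by (simp add: real_sqrt_divide)
qed

lemma I2: assumes s: "s > 0" and x1: "-L \<le> x" and x2: "x < L"
  shows "integral {-L..L} (\<lambda>y. heatGamma s (2*L - x - y)) \<le> sqrt (s/pi) / (L-x) * exp (- ((L-x)^2) / (4 * s))"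
proof -
  define a where "a = L - x"
  have a: "a > 0" using x2 a_def by simp
  define w where "w = (\<lambda>y::real. 2*L - x - y)"
  define F where "F = (\<lambda>y. (2 * s/a) * heatGamma s (w y))"
  have pw: "heatGamma s (w y) \<le> w y / a * heatGamma s (w y)" if y: "y \<in> {-L..L}" for y
  proof -
    have "1 \<le> w y / a" using y a unfolding w_def a_def by (simp add: field_simps)
    then show ?thesis using hG_pos[OF s, of "w y"] mult_right_mono[of 1 "w y / a" "heatGamma s (w y)"] by simp
  qed
  have der: "(F has_vector_derivative (w y / a * heatGamma s (w y))) (at y)" for y
  proof -
    have "((\<lambda>y. heatGamma s (w y)) has_real_derivative (- (w y) / (2 * s) * heatGamma s (w y)) * (-1)) (at y)"
    proof (rule DERIV_chain2[OF hG_deriv[OF s]])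
      show "(w has_real_derivative (-1)) (at y)"
      proof -
        have "((\<lambda>z. 2*L - x - z) has_real_derivative (0 - 1)) (at y)" by (intro DERIV_diff DERIV_const DERIV_ident)
        then show ?thesis unfolding w_def by simp
      qed
    qed
    then have "(F has_real_derivative (2 * s/a) * ((- (w y) / (2 * s) * heatGamma s (w y)) * (-1))) (at y)"
      unfolding F_def by (rule DERIV_cmult)
    moreover have "(2 * s/a) * ((- (w y) / (2 * s) * heatGamma s (w y)) * (-1)) = w y / a * heatGamma s (w y)"
      using s a by (simp add: field_simps)
    ultimately show ?thesis by (simp add: has_real_derivative_iff_has_vector_derivative)
  qed
  have L: "-L \<le> L" using x1 x2 by simp
  have cF: "continuous_on {-L..L} F" unfolding F_def w_def by (intro continuous_intros hG_cont s)
  have hi: "((\<lambda>y. w y / a * heatGamma s (w y)) has_integral (F L - F (-L))) {-L..L}"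
    by (rule fundamental_theorem_of_calculus_interior[OF L cF]) (use der in auto)
  have "integral {-L..L} (\<lambda>y. heatGamma s (w y)) \<le> integral {-L..L} (\<lambda>y. w y / a * heatGamma s (w y))"
  proof (rule integral_le)
    show "(\<lambda>y. heatGamma s (w y)) integrable_on {-L..L}"
      unfolding w_def by (intro integrable_continuous_interval hG_cont s continuous_intros)
    show "(\<lambda>y. w y / a * heatGamma s (w y)) integrable_on {-L..L}" using hi by blast
  qed (rule pw)
  also have "\<dots> = F L - F (-L)" using hi by (rule integral_unique)
  also have "\<dots> \<le> F L"
  proof -
    have "0 < F (-L)" unfolding F_def using s a by (intro mult_pos_pos divide_pos_pos hG_pos) auto
    then show ?thesis by simp
  qed
  also have "F L = (2 * s/sqrt (4*pi * s)) / a * exp (- (a^2) / (4 * s))"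
    unfolding F_def w_def hG_alt[OF s] a_def by simp
  also have "\<dots> = sqrt (s/pi) / (L-x) * exp (- ((L-x)^2) / (4 * s))" unfolding sqrt_id[OF s] a_def ..
  finally show ?thesis unfolding w_def .
qed


definition Eset :: "real \<Rightarrow> real \<Rightarrow> real \<Rightarrow> real" where
  "Eset L x s = exp (- ((L - x)^2) / (4 * s)) + exp (- ((L + x)^2) / (4 * s))"

lemma Kconst_sym: "Kconst s (-x) L = Kconst s x L"
  unfolding Kconst_def by (auto simp: max.commute)

lemma Kconst_nonneg: assumes "s \<ge> 0" "-L \<le> x" "x \<le> L" shows "Kconst s x L \<ge> 0"
proof (cases "x = L \<or> x = -L")
  case False
  then have "L - x > 0" "L + x > 0" using assms by auto
  then have "max (1 / (L - x)) (1 / (L + x)) \<ge> 0" by (simp add: le_max_iff_disj)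
  then show ?thesis using False assms unfolding Kconst_def by simp
qed (auto simp: Kconst_def)

lemma I_one: assumes s: "s > 0" and x1: "-L \<le> x" and x2: "x \<le> L"
  shows "integral {-L..L} (\<lambda>y. heatGamma s (2*L - x - y)) \<le> Kconst s x L * exp (- ((L - x)^2) / (4 * s))"
proof (cases "x = L \<or> x = -L")
  case True
  then show ?thesis using I1[OF s x1 x2] unfolding Kconst_def by simp
next
  case False
  define e where "e = exp (- ((L - x)^2) / (4 * s))"
  define I where "I = integral {-L..L} (\<lambda>y. heatGamma s (2*L - x - y))"
  define M where "M = max (1 / (L - x)) (1 / (L + x))"
  have xl: "x < L" "-L < x" using False x1 x2 by auto
  have b1: "I \<le> 1/2 * e" unfolding I_def e_def using I1[OF s x1 x2] by simp
  have "I \<le> sqrt (s/pi) / (L-x) * e" unfolding I_def e_def using I2[OF s x1 xl(1)] by simp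
  also have "\<dots> \<le> sqrt (s/pi) * M * e"
  proof -
    have "1 / (L - x) \<le> M" unfolding M_def by simp
    then have "sqrt (s/pi) * (1 / (L-x)) \<le> sqrt (s/pi) * M" by (intro mult_left_mono) (use s in auto)
    then show ?thesis unfolding e_def by (intro mult_right_mono) auto
  qed
  finally have b2: "I \<le> sqrt (s/pi) * M * e" .
  have "I \<le> min (1/2) (sqrt (s/pi) * M) * e"
    using b1 b2 by (cases "1/2 \<le> sqrt (s/pi) * M") (auto simp: min_def)
  then show ?thesis using False unfolding Kconst_def I_def e_def M_def by simp
qed

lemma I_two: assumes s: "s > 0" and x1: "-L \<le> x" and x2: "x \<le> L"
  shows "integral {-L..L} (\<lambda>y. heatGamma s (2*L + x + y)) \<le> Kconst s x L * exp (- ((L + x)^2) / (4 * s))"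
proof -
  have "integral {-L..L} (\<lambda>y. heatGamma s (2*L + x + y)) = integral {-L..L} (\<lambda>y. heatGamma s (2*L - (-x) - y))"
    using Henstock_Kurzweil_Integration.integral_reflect_real[of L "-L" "\<lambda>y. heatGamma s (2*L - (-x) - y)"] by simp
  also have "\<dots> \<le> Kconst s (-x) L * exp (- ((L - (-x))^2) / (4 * s))"
    by (rule I_one) (use s x1 x2 in auto)
  finally show ?thesis unfolding Kconst_sym by simp
qed

lemma setup5I: "t > 0 \<Longrightarrow> L > 0 \<Longrightarrow> -L \<le> x \<Longrightarrow> x \<le> L \<Longrightarrow> -L \<le> y \<Longrightarrow> y \<le> L \<Longrightarrow> setup5 L t x y"
  by unfold_locales

lemma gcont: "s > 0 \<Longrightarrow> continuous_on {-L..L} (\<lambda>y. heatGamma s (2*L - x - y) + heatGamma s (2*L + x + y))"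
  by (intro continuous_intros hG_cont)

lemma HD_int_bound: assumes s: "s > 0" and L: "L > 0" and x1: "-L \<le> x" and x2: "x \<le> L"
  shows "integral {-L..L} (\<lambda>y. HD L s x y) \<le> Kconst s x L * Eset L x s"
proof (cases "(\<lambda>y. HD L s x y) integrable_on {-L..L}")
  case True
  have "integral {-L..L} (\<lambda>y. HD L s x y) \<le> integral {-L..L} (\<lambda>y. heatGamma s (2*L - x - y) + heatGamma s (2*L + x + y))"
    by (rule integral_le[OF True integrable_continuous_interval[OF gcont[OF s]]])
       (use setup5.HD_le[OF setup5I[OF s L x1 x2]] in auto)
  also have "\<dots> = integral {-L..L} (\<lambda>y. heatGamma s (2*L - x - y)) + integral {-L..L} (\<lambda>y. heatGamma s (2*L + x + y))"
    by (intro integral_add integrable_continuous_interval hG_cont s continuous_intros)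
  also have "\<dots> \<le> Kconst s x L * exp (- ((L - x)^2) / (4 * s)) + Kconst s x L * exp (- ((L + x)^2) / (4 * s))"
    using I_one[OF s x1 x2] I_two[OF s x1 x2] by linarith
  finally show ?thesis unfolding Eset_def by (simp add: distrib_left)
next
  case False
  then show ?thesis using Kconst_nonneg[of s L x] s x1 x2 unfolding Eset_def
    by (simp add: not_integrable_integral)
qed

lemma hG_le_E: assumes s: "s > 0" and x1: "-L \<le> x" and x2: "x \<le> L" and y1: "-L \<le> y" and y2: "y \<le> L"
  shows "heatGamma s (2*L - x - y) + heatGamma s (2*L + x + y) \<le> Eset L x s / sqrt (4 * pi * s)"
proof -
  have "heatGamma s (2*L - x - y) \<le> heatGamma s (L - x)" by (rule hG_mono[OF s]) (use x1 x2 y1 y2 in linarith)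
  moreover have "heatGamma s (2*L + x + y) \<le> heatGamma s (L + x)" by (rule hG_mono[OF s]) (use x1 x2 y1 y2 in linarith)
  ultimately show ?thesis unfolding Eset_def hG_alt[OF s] by (simp add: add_divide_distrib)
qed

lemma HD2_int_bound: assumes s: "s > 0" and L: "L > 0" and x1: "-L \<le> x" and x2: "x \<le> L"
  shows "integral {-L..L} (\<lambda>y. (HD L s x y)^2) \<le> Kconst s x L * (Eset L x s)^2 / sqrt (4 * pi * s)"
proof (cases "(\<lambda>y. (HD L s x y)^2) integrable_on {-L..L}")
  case True
  define c where "c = Eset L x s / sqrt (4 * pi * s)"
  have pw: "(HD L s x y)^2 \<le> c * (heatGamma s (2*L - x - y) + heatGamma s (2*L + x + y))" if y: "y \<in> {-L..L}" for y
  proof -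
    interpret setup5 L s x y using setup5I[OF s L x1 x2] y by auto
    have "(HD L s x y)^2 = HD L s x y * HD L s x y" by (simp add: power2_eq_square)
    also have "\<dots> \<le> c * (heatGamma s (2*L - x - y) + heatGamma s (2*L + x + y))"
    proof (rule mult_mono)
      show "HD L s x y \<le> c" using HD_le hG_le_E[OF s x1 x2] y unfolding c_def by force
      show "HD L s x y \<le> heatGamma s (2*L - x - y) + heatGamma s (2*L + x + y)" by (rule HD_le)
      show "0 \<le> c" unfolding c_def Eset_def using s by (intro divide_nonneg_nonneg add_nonneg_nonneg) auto
      show "0 \<le> HD L s x y" using HD_pos by simp
    qed
    finally show ?thesis .
  qed
  have "integral {-L..L} (\<lambda>y. (HD L s x y)^2) \<le> integral {-L..L} (\<lambda>y. c * (heatGamma s (2*L - x - y) + heatGamma s (2*L + x + y)))"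
    by (rule integral_le[OF True]) (use pw s in \<open>auto intro!: integrable_continuous_interval continuous_intros hG_cont\<close>)
  also have "\<dots> = c * (integral {-L..L} (\<lambda>y. heatGamma s (2*L - x - y)) + integral {-L..L} (\<lambda>y. heatGamma s (2*L + x + y)))"
    by (simp add: integral_add integrable_continuous_interval hG_cont s continuous_intros)
  also have "\<dots> \<le> c * (Kconst s x L * Eset L x s)"
  proof (rule mult_left_mono)
    show "0 \<le> c" unfolding c_def Eset_def using s by (intro divide_nonneg_nonneg add_nonneg_nonneg) auto
    show "integral {-L..L} (\<lambda>y. heatGamma s (2*L - x - y)) + integral {-L..L} (\<lambda>y. heatGamma s (2*L + x + y)) \<le> Kconst s x L * Eset L x s"
      using I_one[OF s x1 x2] I_two[OF s x1 x2] unfolding Eset_def by (simp add: distrib_left)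
  qed
  finally show ?thesis unfolding c_def by (simp add: power2_eq_square mult_ac)
next
  case False
  then show ?thesis using Kconst_nonneg[of s L x] s x1 x2 unfolding Eset_def
    by (simp add: not_integrable_integral)
qed

lemma Eset_mono: assumes "0 < s" "s \<le> t" shows "Eset L x s \<le> Eset L x t"
proof -
  have m: "exp (- (a^2) / (4 * s)) \<le> exp (- (a^2) / (4 * t))" for a
  proof -
    have "a^2 / (4 * t) \<le> a^2 / (4 * s)" using assms by (intro divide_left_mono) auto
    then show ?thesis by simp
  qed
  show ?thesis unfolding Eset_def by (rule add_mono[OF m m])
qed

lemma Kconst_mono: assumes "0 \<le> s" "s \<le> t" "-L \<le> x" "x \<le> L" shows "Kconst s x L \<le> Kconst t x L"
proof (cases "x = L \<or> x = -L")
  case False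
  then have "L - x > 0" "L + x > 0" using assms by auto
  then have M: "max (1 / (L - x)) (1 / (L + x)) \<ge> 0" by (simp add: le_max_iff_disj)
  have "sqrt (s/pi) \<le> sqrt (t/pi)" using assms by (simp add: divide_right_mono)
  then have "sqrt (s/pi) * max (1 / (L - x)) (1 / (L + x)) \<le> sqrt (t/pi) * max (1 / (L - x)) (1 / (L + x))"
    using M by (intro mult_right_mono) auto
  then have "min (1/2) (sqrt (s/pi) * max (1 / (L - x)) (1 / (L + x))) \<le> min (1/2) (sqrt (t/pi) * max (1 / (L - x)) (1 / (L + x)))"
    by (intro min.mono) auto
  then show ?thesis by (simp only: Kconst_def False if_False)
qed (auto simp: Kconst_def)

lemma HD_zero: "HD L 0 x y = 0"
  unfolding HD_def GammaD_def by simp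

lemma Eset_nonneg: "Eset L x s \<ge> 0" unfolding Eset_def by simp


lemma sqrt_int: assumes t: "t > 0"
  shows "((\<lambda>s. C / sqrt (4 * pi * s)) has_integral (sqrt (t / pi) * C)) {0..t}"
proof -
  define F where "F = (\<lambda>s. C * sqrt s / sqrt pi)"
  have cF: "continuous_on {0..t} F" unfolding F_def by (intro continuous_intros) auto
  have der: "(F has_vector_derivative (C / sqrt (4 * pi * s))) (at s)" if s: "s \<in> {0<..<t}" for s
  proof -
    have sp: "s > 0" using s by simp
    have "(F has_real_derivative (C * (inverse (sqrt s) / 2) / sqrt pi)) (at s)"
      unfolding F_def by (intro DERIV_cdivide DERIV_cmult DERIV_real_sqrt sp)
    moreover have "C * (inverse (sqrt s) / 2) / sqrt pi = C / sqrt (4 * pi * s)"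
      using sp by (simp add: real_sqrt_mult field_simps)
    ultimately show ?thesis by (simp add: has_real_derivative_iff_has_vector_derivative)
  qed
  have "((\<lambda>s. C / sqrt (4 * pi * s)) has_integral (F t - F 0)) {0..t}"
    by (rule fundamental_theorem_of_calculus_interior) (use t cF der in auto)
  moreover have "F t - F 0 = sqrt (t / pi) * C" unfolding F_def by (simp add: real_sqrt_divide)
  ultimately show ?thesis by simp
qed

theorem lemma5p2:
  fixes T L t x y :: real
  assumes "T > 0" and "L > 0"
    and "0 < t" and "t \<le> T"
    and "-L \<le> x" and "x \<le> L" and "-L \<le> y" and "y \<le> L"
  defines "E \<equiv> exp (- ((L - x)^2) / (4 * t)) + exp (- ((L + x)^2) / (4 * t))"
  shows "HD L t x y > 0
    \<and> integral {-L..L} (\<lambda>y. HD L t x y) \<le> Kconst t x L * E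
    \<and> integral {0..t} (\<lambda>s. integral {-L..L} (\<lambda>y. HD L s x y))
           \<le> t * Kconst t x L * E
    \<and> integral {0..t} (\<lambda>s. integral {-L..L} (\<lambda>y. (HD L s x y)^2))
           \<le> sqrt (t / pi) * Kconst t x L * E^2"
proof -
  note t = \<open>0 < t\<close> and L = \<open>L > 0\<close> and x1 = \<open>-L \<le> x\<close> and x2 = \<open>x \<le> L\<close>
  have EE: "E = Eset L x t" unfolding E_def Eset_def ..
  have K0: "Kconst t x L \<ge> 0" using Kconst_nonneg[of t L x] t x1 x2 by simp
  have E0: "E \<ge> 0" unfolding EE by (rule Eset_nonneg)
  have P1: "HD L t x y > 0" using setup5.HD_pos[OF setup5I[OF t L x1 x2 assms(7,8)]] .
  have P2: "integral {-L..L} (\<lambda>y. HD L t x y) \<le> Kconst t x L * E"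
    unfolding EE by (rule HD_int_bound[OF t L x1 x2])
  have P3: "integral {0..t} (\<lambda>s. integral {-L..L} (\<lambda>y. HD L s x y)) \<le> t * Kconst t x L * E"
  proof (cases "(\<lambda>s. integral {-L..L} (\<lambda>y. HD L s x y)) integrable_on {0..t}")
    case True
    have pw: "integral {-L..L} (\<lambda>y. HD L s x y) \<le> Kconst t x L * E" if s: "s \<in> {0..t}" for s
    proof (cases "s = 0")
      case True then show ?thesis using K0 E0 by (simp add: HD_zero)
    next
      case False
      then have sp: "s > 0" using s by simp
      have "integral {-L..L} (\<lambda>y. HD L s x y) \<le> Kconst s x L * Eset L x s" by (rule HD_int_bound[OF sp L x1 x2])
      also have "\<dots> \<le> Kconst t x L * Eset L x t"
        using Kconst_mono[of s t L x] Eset_mono[OF sp, of t L x] s sp x1 x2 K0 Eset_nonneg[of L x s]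
        by (intro mult_mono) auto
      finally show ?thesis unfolding EE .
    qed
    have "integral {0..t} (\<lambda>s. integral {-L..L} (\<lambda>y. HD L s x y)) \<le> integral {0..t} (\<lambda>s. Kconst t x L * E)"
      by (rule integral_le[OF True]) (use pw in auto)
    also have "\<dots> = t * Kconst t x L * E" using t by simp
    finally show ?thesis .
  next
    case False
    then show ?thesis using K0 E0 t by (simp add: not_integrable_integral)
  qed
  have P4: "integral {0..t} (\<lambda>s. integral {-L..L} (\<lambda>y. (HD L s x y)^2)) \<le> sqrt (t / pi) * Kconst t x L * E^2"
  proof (cases "(\<lambda>s. integral {-L..L} (\<lambda>y. (HD L s x y)^2)) integrable_on {0..t}")
    case True
    define C where "C = Kconst t x L * E^2"
    have C0: "C \<ge> 0" unfolding C_def using K0 by simp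
    have hi: "((\<lambda>s. C / sqrt (4 * pi * s)) has_integral (sqrt (t / pi) * C)) {0..t}" by (rule sqrt_int[OF t])
    have pw: "integral {-L..L} (\<lambda>y. (HD L s x y)^2) \<le> C / sqrt (4 * pi * s)" if s: "s \<in> {0..t}" for s
    proof (cases "s = 0")
      case True then show ?thesis by (simp add: HD_zero)
    next
      case False
      then have sp: "s > 0" using s by simp
      have "integral {-L..L} (\<lambda>y. (HD L s x y)^2) \<le> Kconst s x L * (Eset L x s)^2 / sqrt (4 * pi * s)"
        by (rule HD2_int_bound[OF sp L x1 x2])
      also have "\<dots> \<le> C / sqrt (4 * pi * s)"
      proof (rule divide_right_mono)
        have "(Eset L x s)^2 \<le> (Eset L x t)^2"
          using Eset_mono[OF sp, of t L x] s Eset_nonneg[of L x s] by (intro power_mono) auto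
        then show "Kconst s x L * (Eset L x s)^2 \<le> C"
          unfolding C_def EE using Kconst_mono[of s t L x] s sp x1 x2 K0
          by (intro mult_mono) auto
      qed (use sp in simp)
      finally show ?thesis .
    qed
    have "integral {0..t} (\<lambda>s. integral {-L..L} (\<lambda>y. (HD L s x y)^2)) \<le> integral {0..t} (\<lambda>s. C / sqrt (4 * pi * s))"
      by (rule integral_le[OF True]) (use pw hi in auto)
    also have "\<dots> = sqrt (t / pi) * C" using hi by (rule integral_unique)
    finally show ?thesis unfolding C_def by (simp add: mult_ac)
  next
    case False
    then show ?thesis using K0 E0 t by (simp add: not_integrable_integral)
  qed
  show ?thesis using P1 P2 P3 P4 by blast
qed

end
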